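(* Let $L\subseteq\mathbb{Z}^n$ be a lattice, let $L_{\mathbb{R}}$ carry an $L$-equivariant cell complex structure, and let $\psi\colon L_{\mathbb{R}}\to\mathbb{Z}^n$ be a compatible $\mathbb{Z}^n$-stratification. Then the $S$-module $M_\psi\otimes_{S[L]}S$ is (isomorphic to) the $S$-submodule of the group algebra $\Bbbk[\mathbb{Z}^n/L]$ generated by $\{\bm x^{\eta(\psi(\bm p))}:\bm p\text{ a vertex (0-cell) of }L_{\mathbb{R}}\}$.
   Context: Let $n\ge1$, $L\subseteq\mathbb{Z}^n$ a subgroup, $L_{\mathbb{R}}=L\otimes_{\mathbb{Z}}\mathbb{R}\subseteq\mathbb{R}^n$. A cell complex structure on $L_{\mathbb{R}}$ is $L$-equivariant if every translate by $\bm v\in L$ of an open cell is an open cell. Give $\mathbb{Z}^n$ the componentwise order and the Alexandrov topology (open sets = up-closed sets). A compatible $\mathbb{Z}^n$-stratification is a continuous map $\psi\colon L_{\mathbb{R}}\to\mathbb{Z}^n$ constant on each open cell with $\psi(\bm p+\bm v)=\psi(\bm p)+\bm v$ for all $\bm p\in L_{\mathbb{R}},\bm v\in L$. Let $\Bbbk$ be a field, $S=\Bbbk[x_1,\dots,x_n]$, $R=\Bbbk[x_1^{\pm1},\dots,x_n^{\pm1}]$, and $M_\psi\subseteq R$ the $S$-submodule generated by $\{\bm x^{\psi(\bm p)}:\bm p\in L_{\mathbb{R}}\}$. Let $S[L]=S[\bm z^{\bm v}:\bm v\in L]\subseteq S[z_1^{\pm1},\dots,z_n^{\pm1}]$, graded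 by $\deg(\bm x^{\bm u}\bm z^{\bm v})=\bm u+\bm v$. $R$ (and hence $M_\psi$, which is stable under this action) is an $S[L]$-module via $\bm x^{\bm u}\bm z^{\bm v}\mapsto \bm x^{\bm u+\bm v}$, and $S$ is an $S[L]$-module via $S\cong S[L]/\langle \bm z^{\bm v}-1:\bm v\in L\rangle$. Let $\eta\colon\mathbb{Z}^n\to\mathbb{Z}^n/L$ be the quotient map, and $\Bbbk[\mathbb{Z}^n/L]$ the group algebra, an $S$-module via $\bm x^{\bm u}\mapsto \bm x^{\eta(\bm u)}$. *)

theory Defs
  imports "HOL-Analysis.Analysis" "HOL-Library.Poly_Mapping" "HOL-Library.Product_Plus"
begin

definition subgroup_Zn :: "(int^'n::finite) set \<Rightarrow> bool" where
  "subgroup_Zn L \<longleftrightarrow> 0 \<in> L \<and> (\<forall>u\<in>L. \<forall>v\<in>L. u + v \<in> L) \<and> (\<forall>u\<in>L. - u \<in> L)"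

definition real_of_intvec :: "int^'n::finite \<Rightarrow> real^'n" where
  "real_of_intvec v = (\<chi> i. real_of_int (v $ i))"

definition LR :: "(int^'n::finite) set \<Rightarrow> (real^'n) set" where
  "LR L = span (real_of_intvec ` L)"

text \<open>Closed and open d-balls, d = card J, realized inside the coordinate subspace
  spanned by the coordinates in J.\<close>

definition cdisc :: "'n::finite set \<Rightarrow> (real^'n) set" where
  "cdisc J = {x. (\<forall>i. i \<notin> J \<longrightarrow> x $ i = 0) \<and> norm x \<le> 1}"

definition odisc :: "'n::finite set \<Rightarrow> (real^'n) set" where
  "odisc J = {x. (\<forall>i. i \<notin> J \<longrightarrow> x $ i = 0) \<and> norm x < 1}"

definition cell_of_dim :: "(real^'m::finite) set \<Rightarrow> nat \<Rightarrow> bool" where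
  "cell_of_dim e d \<longleftrightarrow> (\<exists>(J::'m set) f g. card J = d \<and> continuous_on (cdisc J) f \<and>
       f ` cdisc J = closure e \<and> homeomorphism (odisc J) e f g)"

definition cell_complex :: "(real^'m::finite) set \<Rightarrow> (real^'m) set set \<Rightarrow> bool" where
  "cell_complex X C \<longleftrightarrow>
     (\<forall>e\<in>C. e \<noteq> {}) \<and> pairwise disjnt C \<and> \<Union>C = X \<and>
     (\<forall>e\<in>C. \<exists>d. cell_of_dim e d \<and>
         closure e - e \<subseteq> \<Union>{e'\<in>C. \<exists>d'<d. cell_of_dim e' d'}) \<and>
     (\<forall>e\<in>C. finite {e'\<in>C. e' \<inter> closure e \<noteq> {}}) \<and>
     (\<forall>A. A \<subseteq> X \<longrightarrow> (closedin (top_of_set X) A \<longleftrightarrow>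
            (\<forall>e\<in>C. closedin (top_of_set X) (A \<inter> closure e))))"

definition L_equivariant :: "(int^'n::finite) set \<Rightarrow> (real^'n) set set \<Rightarrow> bool" where
  "L_equivariant L C \<longleftrightarrow> (\<forall>e\<in>C. \<forall>v\<in>L. (\<lambda>p. p + real_of_intvec v) ` e \<in> C)"

text \<open>Vertices = 0-cells (a 0-cell is a single point).\<close>

definition vertices :: "(real^'m::finite) set set \<Rightarrow> (real^'m) set" where
  "vertices C = {p. {p} \<in> C}"

text \<open>Alexandrov topology on Z^n with componentwise order: open sets are up-closed sets.\<close>

definition up_closed :: "(int^'n::finite) set \<Rightarrow> bool" where
  "up_closed U \<longleftrightarrow> (\<forall>u\<in>U. \<forall>w. u \<le> w \<longrightarrow> w \<in> U)"

definition compatible_stratification ::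
  "(int^'n::finite) set \<Rightarrow> (real^'n) set set \<Rightarrow> (real^'n \<Rightarrow> int^'n) \<Rightarrow> bool" where
  "compatible_stratification L C \<psi> \<longleftrightarrow>
     (\<forall>U. up_closed U \<longrightarrow> openin (top_of_set (LR L)) {p \<in> LR L. \<psi> p \<in> U}) \<and>
     (\<forall>e\<in>C. \<forall>p\<in>e. \<forall>q\<in>e. \<psi> p = \<psi> q) \<and>
     (\<forall>p\<in>LR L. \<forall>v\<in>L. \<psi> (p + real_of_intvec v) = \<psi> p + v)"

text \<open>Laurent polynomial ring R = k[x^{+-1}] as finitely supported maps from Z^n to k
  (with convolution product); monomial x^u is single u 1.\<close>

type_synonym ('n, 'k) laurent = "(int^'n) \<Rightarrow>\<^sub>0 'k"

definition xmono :: "int^'n::finite \<Rightarrow> ('n, 'k::field) laurent" where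
  "xmono u = Poly_Mapping.single u 1"

text \<open>S = k[x_1..x_n] as the subring of R of polynomials with exponents in N^n.\<close>

definition Spoly :: "('n::finite, 'k::field) laurent set" where
  "Spoly = {f. \<forall>u\<in>Poly_Mapping.keys f. 0 \<le> u}"

definition gen_span :: "('a \<Rightarrow> 'b \<Rightarrow> 'b::comm_monoid_add) \<Rightarrow> 'a set \<Rightarrow> 'b set \<Rightarrow> 'b set" where
  "gen_span act A B = {x. \<exists>(N::nat) (a::nat \<Rightarrow> 'a) (b::nat \<Rightarrow> 'b).
     (\<forall>j<N. a j \<in> A \<and> b j \<in> B) \<and> x = (\<Sum>j<N. act (a j) (b j))}"

definition M_psi :: "(int^'n::finite) set \<Rightarrow> (real^'n \<Rightarrow> int^'n) \<Rightarrow> ('n, 'k::field) laurent set" where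
  "M_psi L \<psi> = gen_span (*) Spoly {xmono (\<psi> p) | p. p \<in> LR L}"

text \<open>S[L] = S[z^v : v \<in> L], modelled inside k[x,z^{+-1}] as finitely supported maps on pairs
  (u,v) (monomial x^u z^v), with u \<ge> 0 and v \<in> L.\<close>

type_synonym ('n, 'k) xz = "((int^'n) \<times> (int^'n)) \<Rightarrow>\<^sub>0 'k"

definition SL :: "(int^'n::finite) set \<Rightarrow> ('n, 'k::field) xz set" where
  "SL L = {f. \<forall>k\<in>Poly_Mapping.keys f. 0 \<le> fst k \<and> snd k \<in> L}"

text \<open>The ring map S[L] \<rightarrow> R, x^u z^v \<mapsto> x^(u+v), through which S[L] acts on R.\<close>

definition SL_to_R :: "('n::finite, 'k::field) xz \<Rightarrow> ('n, 'k) laurent" where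
  "SL_to_R f = (\<Sum>k\<in>Poly_Mapping.keys f. Poly_Mapping.single (fst k + snd k) (Poly_Mapping.lookup f k))"

text \<open>The ideal I = <z^v - 1 : v \<in> L> of S[L], with S = S[L]/I.\<close>

definition I_L :: "(int^'n::finite) set \<Rightarrow> ('n, 'k::field) xz set" where
  "I_L L = gen_span (*) (SL L) {Poly_Mapping.single (0, v) 1 - 1 | v. v \<in> L}"

text \<open>I \<cdot> M for an S[L]-submodule M of R; then M \<otimes>_{S[L]} S = M \<otimes>_{S[L]} S[L]/I = M / I M.\<close>

definition IM :: "(int^'n::finite) set \<Rightarrow> ('n, 'k::field) laurent set \<Rightarrow> ('n, 'k) laurent set" where
  "IM L M = gen_span (\<lambda>i m. SL_to_R i * m) (I_L L) M"

text \<open>eta(u) = u + L, the coset of u. k[Z^n/L] is represented by finitely supported maps from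
  cosets to k; its elements are those with Poly_Mapping.keys among the cosets.\<close>

definition eta :: "(int^'n::finite) set \<Rightarrow> int^'n \<Rightarrow> (int^'n) set" where
  "eta L u = (\<lambda>v. u + v) ` L"

definition group_alg :: "(int^'n::finite) set \<Rightarrow> ((int^'n) set \<Rightarrow>\<^sub>0 'k::field) set" where
  "group_alg L = {f. Poly_Mapping.keys f \<subseteq> range (eta L)}"

text \<open>S-action on k[Z^n/L]: x^u acts as multiplication by x^(eta u) in the group algebra,
  i.e. it translates the coset c to u + c.\<close>

definition S_act :: "('n::finite, 'k::field) laurent \<Rightarrow> ((int^'n) set \<Rightarrow>\<^sub>0 'k) \<Rightarrow> ((int^'n) set \<Rightarrow>\<^sub>0 'k)" where
  "S_act s f = (\<Sum>u\<in>Poly_Mapping.keys s. \<Sum>c\<in>Poly_Mapping.keys f.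
       Poly_Mapping.single ((\<lambda>w. u + w) ` c) (Poly_Mapping.lookup s u * Poly_Mapping.lookup f c))"

definition gmono :: "(int^'n::finite) set \<Rightarrow> int^'n \<Rightarrow> ((int^'n) set \<Rightarrow>\<^sub>0 'k::field)" where
  "gmono L u = Poly_Mapping.single (eta L u) 1"

text \<open>M/K \<cong> N as S-modules, expressed (first isomorphism theorem) by a surjective
  S-linear map M \<rightarrow> N with kernel K.\<close>

definition quotient_iso ::
  "('n::finite, 'k::field) laurent set \<Rightarrow> ('n, 'k) laurent set \<Rightarrow> ((int^'n) set \<Rightarrow>\<^sub>0 'k) set \<Rightarrow> bool" where
  "quotient_iso M K N \<longleftrightarrow> (\<exists>\<Phi>. \<Phi> ` M = N \<and>
      (\<forall>m\<in>M. \<forall>m'\<in>M. \<Phi> (m + m') = \<Phi> m + \<Phi> m') \<and>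
      (\<forall>s\<in>Spoly. \<forall>m\<in>M. \<Phi> (s * m) = S_act s (\<Phi> m)) \<and>
      {m\<in>M. \<Phi> m = 0} = K)"

end

theory Submission
  imports Defs
begin

lemma gen_span_0: "0 \<in> gen_span act A B"
  unfolding gen_span_def by (rule CollectI, rule exI[of _ 0]) auto

lemma gen_span_act: "a \<in> A \<Longrightarrow> b \<in> B \<Longrightarrow> act a b \<in> gen_span act A B"
  unfolding gen_span_def
  by (rule CollectI, rule exI[of _ 1], rule exI[of _ "\<lambda>_. a"], rule exI[of _ "\<lambda>_. b"]) auto

lemma gen_span_add_act:
  fixes act :: "'a \<Rightarrow> 'b \<Rightarrow> 'b::comm_monoid_add"
  assumes "z \<in> gen_span act A B" "a0 \<in> A" "b0 \<in> B"
  shows "z + act a0 b0 \<in> gen_span act A B"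
proof -
  obtain N and a :: "nat \<Rightarrow> 'a" and b :: "nat \<Rightarrow> 'b" where ab: "\<forall>j<N. a j \<in> A \<and> b j \<in> B" "z = (\<Sum>j<N. act (a j) (b j))"
    using assms(1) unfolding gen_span_def by blast
  define a' where "a' = a(N := a0)"
  define b' where "b' = b(N := b0)"
  have "(\<Sum>j<Suc N. act (a' j) (b' j)) = (\<Sum>j<N. act (a' j) (b' j)) + act a0 b0"
    by (simp add: a'_def b'_def)
  also have "(\<Sum>j<N. act (a' j) (b' j)) = z"
    unfolding ab(2) a'_def b'_def by (rule sum.cong) auto
  finally have e: "z + act a0 b0 = (\<Sum>j<Suc N. act (a' j) (b' j))" by simp
  have "\<forall>j<Suc N. a' j \<in> A \<and> b' j \<in> B" using ab(1) assms(2,3)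
    by (auto simp: a'_def b'_def less_Suc_eq)
  then show ?thesis unfolding gen_span_def using e
    by (intro CollectI exI[of _ "Suc N"] exI[of _ a'] exI[of _ b'] conjI)
qed

lemma gen_span_induct:
  fixes act :: "'a \<Rightarrow> 'b \<Rightarrow> 'b::comm_monoid_add"
  assumes "x \<in> gen_span act A B" "P 0" "\<And>a b. a \<in> A \<Longrightarrow> b \<in> B \<Longrightarrow> P (act a b)"
    "\<And>x y. P x \<Longrightarrow> P y \<Longrightarrow> P (x + y)"
  shows "P x"
proof -
  obtain N and a :: "nat \<Rightarrow> 'a" and b :: "nat \<Rightarrow> 'b" where ab: "\<forall>j<N. a j \<in> A \<and> b j \<in> B" "x = (\<Sum>j<N. act (a j) (b j))"
    using assms(1) unfolding gen_span_def by blast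
  have "\<forall>j<N. a j \<in> A \<and> b j \<in> B \<Longrightarrow> P (\<Sum>j<N. act (a j) (b j))" for N
  proof (induction N)
    case 0
    then show ?case using assms(2) by simp
  next
    case (Suc N)
    then have "P (\<Sum>j<N. act (a j) (b j))" by simp
    moreover have "P (act (a N) (b N))" using Suc.prems by (intro assms(3)) auto
    ultimately show ?case by (simp add: assms(4))
  qed
  then show ?thesis using ab by blast
qed

lemma gen_span_add:
  fixes act :: "'a \<Rightarrow> 'b \<Rightarrow> 'b::comm_monoid_add"
  assumes "x \<in> gen_span act A B" "y \<in> gen_span act A B"
  shows "x + y \<in> gen_span act A B"
proof -
  obtain N and a :: "nat \<Rightarrow> 'a" and b :: "nat \<Rightarrow> 'b" where ab: "\<forall>j<N. a j \<in> A \<and> b j \<in> B" "y = (\<Sum>j<N. act (a j) (b j))"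
    using assms(2) unfolding gen_span_def by blast
  have "\<forall>j<N. a j \<in> A \<and> b j \<in> B \<Longrightarrow> x + (\<Sum>j<N. act (a j) (b j)) \<in> gen_span act A B" for N
  proof (induction N)
    case 0
    then show ?case using assms(1) by simp
  next
    case (Suc N)
    then have "x + (\<Sum>j<N. act (a j) (b j)) \<in> gen_span act A B" by simp
    then have "x + (\<Sum>j<N. act (a j) (b j)) + act (a N) (b N) \<in> gen_span act A B"
      using Suc.prems by (intro gen_span_add_act) auto
    then show ?case by (simp add: add.assoc)
  qed
  then show ?thesis using ab by blast
qed

lemma gen_span_sum:
  fixes act :: "'a \<Rightarrow> 'b \<Rightarrow> 'b::comm_monoid_add"
  assumes "finite I" "\<And>i. i \<in> I \<Longrightarrow> f i \<in> gen_span act A B"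
  shows "sum f I \<in> gen_span act A B"
  using assms
proof (induction I rule: finite_induct)
  case empty
  then show ?case by (simp add: gen_span_0)
next
  case (insert x F)
  then show ?case by (simp add: gen_span_add)
qed

definition lin :: "('a \<Rightarrow> 'k::zero \<Rightarrow> 'b::comm_monoid_add) \<Rightarrow> ('a \<Rightarrow>\<^sub>0 'k) \<Rightarrow> 'b" where
  "lin g f = (\<Sum>a\<in>Poly_Mapping.keys f. g a (Poly_Mapping.lookup f a))"

lemma lin_superset:
  assumes "finite S" "Poly_Mapping.keys f \<subseteq> S" "\<And>a. g a 0 = 0"
  shows "lin g f = (\<Sum>a\<in>S. g a (Poly_Mapping.lookup f a))"
  unfolding lin_def using assms
  by (intro sum.mono_neutral_left) (auto simp: in_keys_iff)

lemma lin_add: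
  fixes g :: "'a \<Rightarrow> 'k::comm_monoid_add \<Rightarrow> 'b::comm_monoid_add"
  assumes "\<And>a. g a 0 = 0" "\<And>a x y. g a (x + y) = g a x + g a y"
  shows "lin g (f + f') = lin g f + lin g f'"
  unfolding lin_def by (rule setsum_keys_plus_distrib) (use assms in auto)

lemma lin_zero: "lin g 0 = 0"
  unfolding lin_def by simp

lemma lin_single:
  assumes "\<And>a. g a 0 = 0"
  shows "lin g (Poly_Mapping.single k c) = g k c"
  unfolding lin_def using assms by (cases "c = 0") auto

lemma lin_sum:
  fixes g :: "'a \<Rightarrow> 'k::comm_monoid_add \<Rightarrow> 'b::comm_monoid_add"
  assumes "\<And>a. g a 0 = 0" "\<And>a x y. g a (x + y) = g a x + g a y"
  shows "lin g (sum F I) = (\<Sum>i\<in>I. lin g (F i))"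
proof (cases "finite I")
  case True
  then show ?thesis
    by (induction I rule: finite_induct) (auto simp: lin_zero lin_add[OF assms])
qed (simp add: lin_zero)

lemma lin_fun_add: "lin (\<lambda>a c. g1 a c + g2 a c) f = lin g1 f + lin g2 f"
  unfolding lin_def by (simp add: sum.distrib)

lemma lin_diff:
  fixes g :: "'a \<Rightarrow> 'k::ab_group_add \<Rightarrow> 'b::ab_group_add"
  assumes "\<And>a. g a 0 = 0" "\<And>a x y. g a (x + y) = g a x + g a y"
  shows "lin g (f - f') = lin g f - lin g f'"
proof -
  have "lin g (f - f') + lin g f' = lin g f"
    using lin_add[of g "f - f'" f', OF assms] by simp
  then show ?thesis by (simp add: algebra_simps)
qed

lemma poly_expand: "f = (\<Sum>a\<in>Poly_Mapping.keys f. Poly_Mapping.single a (Poly_Mapping.lookup f a))"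
proof (rule poly_mapping_eqI)
  fix k
  show "Poly_Mapping.lookup f k = Poly_Mapping.lookup (\<Sum>a\<in>Poly_Mapping.keys f. Poly_Mapping.single a (Poly_Mapping.lookup f a)) k"
    by (simp add: lookup_sum lookup_single when_def in_keys_iff)
qed

lemma mult_expand:
  fixes f g :: "'a::comm_monoid_add \<Rightarrow>\<^sub>0 'k::comm_ring_1"
  shows "f * g = (\<Sum>a\<in>Poly_Mapping.keys f. \<Sum>b\<in>Poly_Mapping.keys g.
     Poly_Mapping.single (a + b) (Poly_Mapping.lookup f a * Poly_Mapping.lookup g b))"
proof -
  have "f * g = (\<Sum>a\<in>Poly_Mapping.keys f. Poly_Mapping.single a (Poly_Mapping.lookup f a)) *
        (\<Sum>b\<in>Poly_Mapping.keys g. Poly_Mapping.single b (Poly_Mapping.lookup g b))"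
    using poly_expand[of f] poly_expand[of g] by simp
  also have "\<dots> = (\<Sum>a\<in>Poly_Mapping.keys f. \<Sum>b\<in>Poly_Mapping.keys g.
     Poly_Mapping.single (a + b) (Poly_Mapping.lookup f a * Poly_Mapping.lookup g b))"
    by (simp add: sum_product mult_single)
  finally show ?thesis .
qed

definition mapk :: "('a \<Rightarrow> 'b) \<Rightarrow> ('a \<Rightarrow>\<^sub>0 'k::comm_monoid_add) \<Rightarrow> ('b \<Rightarrow>\<^sub>0 'k)" where
  "mapk h = lin (\<lambda>a c. Poly_Mapping.single (h a) c)"

lemma mapk_add: "mapk h (f + g) = mapk h f + mapk h g"
  unfolding mapk_def by (rule lin_add) (auto simp: single_add)

lemma mapk_single: "mapk h (Poly_Mapping.single k c) = Poly_Mapping.single (h k) c"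
  unfolding mapk_def by (rule lin_single) simp

lemma mapk_sum: "mapk h (sum F I) = (\<Sum>i\<in>I. mapk h (F i))"
  unfolding mapk_def by (rule lin_sum) (auto simp: single_add)

lemma mapk_diff:
  fixes f g :: "'a \<Rightarrow>\<^sub>0 'k::ab_group_add"
  shows "mapk h (f - g) = mapk h f - mapk h g"
  unfolding mapk_def by (rule lin_diff) (auto simp: single_add)

lemma mapk_mult:
  fixes f g :: "'a::comm_monoid_add \<Rightarrow>\<^sub>0 'k::comm_ring_1"
  assumes "\<And>a b. h (a + b) = (h a + h b :: 'b::comm_monoid_add)"
  shows "mapk h (f * g) = mapk h f * mapk h g"
proof -
  have "mapk h (f * g) = (\<Sum>a\<in>Poly_Mapping.keys f. \<Sum>b\<in>Poly_Mapping.keys g.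
     Poly_Mapping.single (h a + h b) (Poly_Mapping.lookup f a * Poly_Mapping.lookup g b))"
    by (subst mult_expand) (simp add: mapk_sum mapk_single assms)
  also have "\<dots> = mapk h f * mapk h g"
    unfolding mapk_def lin_def by (simp add: sum_product mult_single)
  finally show ?thesis .
qed

lemma SL_to_R_mapk: "SL_to_R = mapk (\<lambda>k. fst k + snd k)"
  unfolding SL_to_R_def mapk_def lin_def by (rule ext) simp


lemma vec_nonneg_add: "0 \<le> (a::int^'n::finite) \<Longrightarrow> 0 \<le> b \<Longrightarrow> 0 \<le> a + b"
  by (simp add: less_eq_vec_def)

lemma vec_le_diff: "(a::int^'n::finite) \<le> b \<Longrightarrow> 0 \<le> b - a"
  by (simp add: less_eq_vec_def)

lemma real_of_intvec_add: "real_of_intvec (u + v) = real_of_intvec u + real_of_intvec v"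
  by (simp add: real_of_intvec_def vec_eq_iff)

lemma LR_shift: "p \<in> LR L \<Longrightarrow> v \<in> L \<Longrightarrow> p + real_of_intvec v \<in> LR L"
  unfolding LR_def by (rule span_add) (auto intro: span_base)

definition Aset :: "(int^'n::finite) set \<Rightarrow> (real^'n \<Rightarrow> int^'n) \<Rightarrow> (int^'n) set" where
  "Aset L \<psi> = {w + \<psi> p | w p. 0 \<le> w \<and> p \<in> LR L}"

lemma Aset_L:
  assumes "compatible_stratification L C \<psi>" "a \<in> Aset L \<psi>" "v \<in> L"
  shows "v + a \<in> Aset L \<psi>"
proof -
  obtain w p where wp: "a = w + \<psi> p" "0 \<le> w" "p \<in> LR L" using assms(2) unfolding Aset_def by blast
  have "\<psi> (p + real_of_intvec v) = \<psi> p + v"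
    using assms(1) wp(3) assms(3) unfolding compatible_stratification_def by blast
  then have "v + a = w + \<psi> (p + real_of_intvec v)" using wp by (simp add: algebra_simps)
  then show ?thesis unfolding Aset_def using wp LR_shift[OF wp(3) assms(3)] by blast
qed

lemma Aset_pos:
  assumes "a \<in> Aset L \<psi>" "0 \<le> u"
  shows "u + a \<in> Aset L \<psi>"
proof -
  obtain w p where wp: "a = w + \<psi> p" "0 \<le> w" "p \<in> LR L" using assms(1) unfolding Aset_def by blast
  then have "u + a = (u + w) + \<psi> p" "0 \<le> u + w" using assms(2) vec_nonneg_add
    by (auto simp: algebra_simps)
  then show ?thesis unfolding Aset_def using wp by blast
qed

lemma M_char:
  fixes L :: "(int^'n::finite) set" and \<psi> :: "real^'n \<Rightarrow> int^'n"
  shows "(M_psi L \<psi> :: ('n, 'k::field) laurent set) = {f. Poly_Mapping.keys f \<subseteq> Aset L \<psi>}"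
    (is "?M = ?R")
proof
  show "?M \<subseteq> ?R"
  proof
    fix f :: "('n, 'k) laurent" assume "f \<in> ?M"
    then have "Poly_Mapping.keys f \<subseteq> Aset L \<psi>"
      unfolding M_psi_def
    proof (rule gen_span_induct[where P = "\<lambda>f. Poly_Mapping.keys f \<subseteq> Aset L \<psi>"])
      show "Poly_Mapping.keys 0 \<subseteq> Aset L \<psi>" by simp
    next
      fix s g :: "('n, 'k) laurent" assume s: "s \<in> Spoly" and g: "g \<in> {xmono (\<psi> p) |p. p \<in> LR L}"
      then obtain p where p: "g = xmono (\<psi> p)" "p \<in> LR L" by blast
      have "Poly_Mapping.keys (s * g) \<subseteq> {a + b |a b. a \<in> Poly_Mapping.keys s \<and> b \<in> Poly_Mapping.keys g}"
        by (rule keys_mult)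
      also have "\<dots> \<subseteq> Aset L \<psi>"
        using s p unfolding Spoly_def Aset_def xmono_def by auto
      finally show "Poly_Mapping.keys (s * g) \<subseteq> Aset L \<psi>" .
    next
      fix x y :: "('n, 'k) laurent"
      assume "Poly_Mapping.keys x \<subseteq> Aset L \<psi>" "Poly_Mapping.keys y \<subseteq> Aset L \<psi>"
      then show "Poly_Mapping.keys (x + y) \<subseteq> Aset L \<psi>" using keys_add[of x y] by blast
    qed
    then show "f \<in> ?R" by simp
  qed
next
  show "?R \<subseteq> ?M"
  proof
    fix f :: "('n, 'k) laurent" assume f: "f \<in> ?R"
    have "(\<Sum>a\<in>Poly_Mapping.keys f. Poly_Mapping.single a (Poly_Mapping.lookup f a)) \<in> ?M"
      unfolding M_psi_def
    proof (rule gen_span_sum)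
      fix a assume a: "a \<in> Poly_Mapping.keys f"
      then obtain w p where wp: "a = w + \<psi> p" "0 \<le> w" "p \<in> LR L"
        using f unfolding Aset_def by blast
      have e: "Poly_Mapping.single a (Poly_Mapping.lookup f a) = Poly_Mapping.single w (Poly_Mapping.lookup f a) * xmono (\<psi> p)"
        by (simp add: xmono_def mult_single wp(1))
      have "Poly_Mapping.single w (Poly_Mapping.lookup f a) \<in> Spoly"
        using wp(2) by (simp add: Spoly_def)
      then show "Poly_Mapping.single a (Poly_Mapping.lookup f a) \<in> gen_span (*) Spoly {xmono (\<psi> p) |p. p \<in> LR L}"
        unfolding e using wp(3) by (intro gen_span_act) auto
    qed simp
    then show "f \<in> ?M" using poly_expand[of f] by simp
  qed
qed

lemma eta_shift: "(\<lambda>w. u + w) ` eta L a = eta L (u + a)"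
  unfolding eta_def image_image by (simp add: add.assoc)

lemma eta_L:
  assumes "subgroup_Zn L" "v \<in> L"
  shows "eta L (v + a) = eta L a"
proof
  show "eta L (v + a) \<subseteq> eta L a"
  proof
    fix x assume "x \<in> eta L (v + a)"
    then obtain l where l: "l \<in> L" "x = v + a + l" unfolding eta_def by blast
    then have "v + l \<in> L" using assms unfolding subgroup_Zn_def by blast
    moreover have "x = a + (v + l)" using l by (simp add: algebra_simps)
    ultimately show "x \<in> eta L a" unfolding eta_def by blast
  qed
next
  show "eta L a \<subseteq> eta L (v + a)"
  proof
    fix x assume "x \<in> eta L a"
    then obtain l where l: "l \<in> L" "x = a + l" unfolding eta_def by blast
    then have "l + - v \<in> L" using assms unfolding subgroup_Zn_def by blast
    moreover have "x = (v + a) + (l + - v)" using l by (simp add: algebra_simps)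
    ultimately show "x \<in> eta L (v + a)" unfolding eta_def by blast
  qed
qed

lemma eta_eq_diff:
  assumes "subgroup_Zn L" "eta L a = eta L b"
  shows "a - b \<in> L"
proof -
  have "b \<in> eta L b" using assms(1) unfolding eta_def subgroup_Zn_def by force
  then obtain l where "l \<in> L" "b = a + l" using assms(2) unfolding eta_def by auto
  then show ?thesis using assms(1) unfolding subgroup_Zn_def by (simp add: algebra_simps)
qed

definition Phi :: "(int^'n::finite) set \<Rightarrow> ('n, 'k::field) laurent \<Rightarrow> ((int^'n) set \<Rightarrow>\<^sub>0 'k)" where
  "Phi L = mapk (eta L)"

lemma S_act_lin:
  "S_act s F = lin (\<lambda>u x. lin (\<lambda>c y. Poly_Mapping.single ((\<lambda>w. u + w) ` c) (x * y)) F) s"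
  unfolding S_act_def lin_def by simp

lemma S_act_add_right: "S_act s (F + G) = S_act s F + S_act s G"
proof -
  have "S_act s (F + G) = lin (\<lambda>u x. lin (\<lambda>c y. Poly_Mapping.single ((\<lambda>w. u + w) ` c) (x * y)) F
       + lin (\<lambda>c y. Poly_Mapping.single ((\<lambda>w. u + w) ` c) (x * y)) G) s"
    unfolding S_act_lin
    by (subst lin_add) (auto simp: distrib_left single_add)
  then show ?thesis unfolding S_act_lin lin_fun_add .
qed

lemma S_act_zero_right: "S_act s 0 = 0"
  unfolding S_act_def by simp

lemma S_act_sum_right: "S_act s (sum F I) = (\<Sum>i\<in>I. S_act s (F i))"
proof (cases "finite I")
  case True
  then show ?thesis
    by (induction I rule: finite_induct) (auto simp: S_act_zero_right S_act_add_right)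
qed (simp add: S_act_zero_right)

lemma S_act_single:
  "S_act s (Poly_Mapping.single K d) = lin (\<lambda>u x. Poly_Mapping.single ((\<lambda>w. u + w) ` K) (x * d)) s"
  unfolding S_act_lin by (subst lin_single) auto

lemma Phi_mult: "Phi L (s * m) = S_act s (Phi L m)"
proof -
  have "Phi L (s * m) = (\<Sum>u\<in>Poly_Mapping.keys s. \<Sum>a\<in>Poly_Mapping.keys m.
     Poly_Mapping.single (eta L (u + a)) (Poly_Mapping.lookup s u * Poly_Mapping.lookup m a))"
    unfolding Phi_def by (subst mult_expand) (simp add: mapk_sum mapk_single)
  also have "\<dots> = (\<Sum>a\<in>Poly_Mapping.keys m. \<Sum>u\<in>Poly_Mapping.keys s.
     Poly_Mapping.single (eta L (u + a)) (Poly_Mapping.lookup s u * Poly_Mapping.lookup m a))"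
    by (rule sum.swap)
  also have "\<dots> = (\<Sum>a\<in>Poly_Mapping.keys m. S_act s (Poly_Mapping.single (eta L a) (Poly_Mapping.lookup m a)))"
    by (simp add: S_act_single lin_def eta_shift)
  also have "\<dots> = S_act s (Phi L m)"
    unfolding Phi_def mapk_def lin_def by (simp add: S_act_sum_right)
  finally show ?thesis .
qed

lemma Phi_xmono: "Phi L (xmono u) = gmono L u"
  unfolding Phi_def xmono_def gmono_def by (simp add: mapk_single)

lemma Phi_add: "Phi L (f + g) = Phi L f + Phi L g"
  unfolding Phi_def by (rule mapk_add)

lemma Phi_diff: "Phi L (f - g) = Phi L f - Phi L g"
  unfolding Phi_def by (rule mapk_diff)

lemma Phi_zero: "Phi L 0 = 0"
  unfolding Phi_def mapk_def by (rule lin_zero)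

lemma Phi_L_mult:
  assumes "subgroup_Zn L" "v \<in> L"
  shows "Phi L (xmono v * h) = Phi L h"
proof -
  have "Phi L (xmono v * h) = (\<Sum>a\<in>Poly_Mapping.keys h.
     Poly_Mapping.single (eta L (v + a)) (Poly_Mapping.lookup h a))"
    unfolding Phi_def xmono_def by (subst mult_expand) (simp add: mapk_sum mapk_single)
  also have "\<dots> = Phi L h"
    unfolding Phi_def mapk_def lin_def using eta_L[OF assms] by simp
  finally show ?thesis .
qed

lemma mapk_one: "h 0 = 0 \<Longrightarrow> mapk h 1 = 1"
  by (metis mapk_single single_one)

lemma mapk_comp: "mapk \<sigma> (mapk h m) = mapk (\<sigma> \<circ> h) m"
proof -
  have "mapk h m = (\<Sum>a\<in>Poly_Mapping.keys m. Poly_Mapping.single (h a) (Poly_Mapping.lookup m a))"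
    unfolding mapk_def lin_def ..
  then have "mapk \<sigma> (mapk h m) = (\<Sum>a\<in>Poly_Mapping.keys m. mapk \<sigma> (Poly_Mapping.single (h a) (Poly_Mapping.lookup m a)))"
    by (simp only: mapk_sum)
  also have "\<dots> = (\<Sum>a\<in>Poly_Mapping.keys m. Poly_Mapping.single (\<sigma> (h a)) (Poly_Mapping.lookup m a))"
    by (simp only: mapk_single)
  also have "\<dots> = mapk (\<sigma> \<circ> h) m" by (simp add: mapk_def lin_def)
  finally show ?thesis .
qed

lemma keys_SL_to_R: "Poly_Mapping.keys (SL_to_R a) \<subseteq> (\<lambda>k. fst k + snd k) ` Poly_Mapping.keys a"
proof -
  have "Poly_Mapping.keys (SL_to_R a) \<subseteq> (\<Union>k\<in>Poly_Mapping.keys a. Poly_Mapping.keys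
      (Poly_Mapping.single (fst k + snd k) (Poly_Mapping.lookup a k)))"
    unfolding SL_to_R_def by (rule keys_sum)
  also have "\<dots> \<subseteq> (\<lambda>k. fst k + snd k) ` Poly_Mapping.keys a" by auto
  finally show ?thesis .
qed

lemma SL_to_R_add: "SL_to_R (f + g) = SL_to_R f + SL_to_R g"
  unfolding SL_to_R_mapk by (rule mapk_add)

lemma SL_to_R_zero: "SL_to_R 0 = 0"
  unfolding SL_to_R_mapk mapk_def by (rule lin_zero)

lemma SL_to_R_one: "SL_to_R 1 = 1"
  unfolding SL_to_R_mapk by (rule mapk_one) simp

lemma SL_to_R_gen:
  fixes a :: "('n::finite, 'k::field) xz"
  shows "SL_to_R (a * (Poly_Mapping.single (0, v) 1 - 1)) = SL_to_R a * (xmono v - 1)"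
proof -
  have h: "\<And>x y :: (int^'n) \<times> (int^'n). fst (x + y) + snd (x + y) = (fst x + snd x) + (fst y + snd y)"
    by (simp add: algebra_simps)
  show ?thesis
    unfolding SL_to_R_mapk
    by (simp add: mapk_mult[OF h] mapk_diff mapk_single mapk_one xmono_def)
qed

context
  fixes L :: "(int^'n::finite) set" and C :: "(real^'n) set set" and \<psi> :: "real^'n \<Rightarrow> int^'n"
  assumes sg: "subgroup_Zn L" and cs: "compatible_stratification L C \<psi>"
begin

abbreviation MM :: "('n, 'k::field) laurent set" where "MM \<equiv> M_psi L \<psi>"

lemma MM_add:
  assumes "f \<in> MM" "g \<in> MM" shows "f + g \<in> MM"
proof -
  have "Poly_Mapping.keys f \<subseteq> Aset L \<psi>" "Poly_Mapping.keys g \<subseteq> Aset L \<psi>"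
    using assms by (simp_all add: M_char)
  then have "Poly_Mapping.keys (f + g) \<subseteq> Aset L \<psi>"
    using keys_add[of f g] by (meson le_sup_iff order_trans)
  then show ?thesis by (simp add: M_char)
qed

lemma MM_diff:
  assumes "f \<in> MM" "g \<in> MM" shows "f - g \<in> MM"
proof -
  have "Poly_Mapping.keys f \<subseteq> Aset L \<psi>" "Poly_Mapping.keys g \<subseteq> Aset L \<psi>"
    using assms by (simp_all add: M_char)
  then have "Poly_Mapping.keys (f - g) \<subseteq> Aset L \<psi>"
    using keys_diff[of f g] by (meson le_sup_iff order_trans)
  then show ?thesis by (simp add: M_char)
qed

lemma MM_zero: "0 \<in> MM"
  by (simp add: M_char)

lemma MM_single: "a \<in> Aset L \<psi> \<Longrightarrow> Poly_Mapping.single a c \<in> MM"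
  by (simp add: M_char)

lemma MM_mult_SL:
  assumes "a \<in> SL L" "m \<in> MM"
  shows "SL_to_R a * m \<in> MM"
proof -
  have "Poly_Mapping.keys (SL_to_R a * m) \<subseteq> {x + y |x y. x \<in> Poly_Mapping.keys (SL_to_R a) \<and> y \<in> Poly_Mapping.keys m}"
    by (rule keys_mult)
  also have "\<dots> \<subseteq> Aset L \<psi>"
  proof
    fix z assume "z \<in> {x + y |x y. x \<in> Poly_Mapping.keys (SL_to_R a) \<and> y \<in> Poly_Mapping.keys m}"
    then obtain x y where xy: "z = x + y" "x \<in> Poly_Mapping.keys (SL_to_R a)" "y \<in> Poly_Mapping.keys m" by blast
    then obtain k where k: "k \<in> Poly_Mapping.keys a" "x = fst k + snd k" using keys_SL_to_R by blast
    have k2: "0 \<le> fst k" "snd k \<in> L" using k(1) assms(1) unfolding SL_def by auto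
    have "y \<in> Aset L \<psi>" using xy(3) assms(2) unfolding M_char by blast
    then have "snd k + y \<in> Aset L \<psi>" using Aset_L[OF cs _ k2(2)] by blast
    then have "fst k + (snd k + y) \<in> Aset L \<psi>" using Aset_pos k2(1) by blast
    then show "z \<in> Aset L \<psi>" using xy k by (simp add: add.assoc)
  qed
  finally show ?thesis unfolding M_char by blast
qed

lemma MM_mult_xmono:
  fixes m :: "('n, 'k::field) laurent"
  assumes "v \<in> L" "m \<in> MM"
  shows "xmono v * m \<in> MM"
proof -
  have "Poly_Mapping.keys (xmono v * m) \<subseteq> {x + y |x y. x \<in> Poly_Mapping.keys (xmono v :: ('n,'k) laurent) \<and> y \<in> Poly_Mapping.keys m}"
    by (rule keys_mult)
  also have "\<dots> \<subseteq> Aset L \<psi>"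
    using assms Aset_L[OF cs] unfolding M_char xmono_def by auto
  finally show ?thesis unfolding M_char by blast
qed

lemma I_L_prop:
  assumes "i \<in> I_L L"
  shows "\<forall>m\<in>(MM :: ('n, 'k::field) laurent set). SL_to_R i * m \<in> MM \<and> Phi L (SL_to_R i * m) = 0"
  using assms unfolding I_L_def
proof (rule gen_span_induct)
  show "\<forall>m\<in>(MM :: ('n, 'k) laurent set). SL_to_R 0 * m \<in> MM \<and> Phi L (SL_to_R 0 * m) = 0"
    by (simp add: SL_to_R_zero MM_zero Phi_zero)
next
  fix a z :: "('n, 'k) xz"
  assume a: "a \<in> SL L" and z: "z \<in> {Poly_Mapping.single (0, v) 1 - 1 |v. v \<in> L}"
  then obtain v where v: "v \<in> L" "z = Poly_Mapping.single (0, v) 1 - 1" by blast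
  show "\<forall>m\<in>(MM :: ('n, 'k) laurent set). SL_to_R (a * z) * m \<in> MM \<and> Phi L (SL_to_R (a * z) * m) = 0"
  proof
    fix m :: "('n, 'k) laurent" assume m: "m \<in> MM"
    define h where "h = SL_to_R a * m"
    have hM: "h \<in> MM" unfolding h_def using MM_mult_SL[OF a m] .
    have e: "SL_to_R (a * z) * m = xmono v * h - h"
      unfolding v(2) SL_to_R_gen h_def by (simp add: algebra_simps)
    show "SL_to_R (a * z) * m \<in> MM \<and> Phi L (SL_to_R (a * z) * m) = 0"
      unfolding e using MM_diff[OF MM_mult_xmono[OF v(1) hM] hM]
      by (simp add: Phi_diff Phi_L_mult[OF sg v(1)])
  qed
next
  fix x y :: "('n, 'k) xz"
  assume "\<forall>m\<in>(MM :: ('n, 'k) laurent set). SL_to_R x * m \<in> MM \<and> Phi L (SL_to_R x * m) = 0"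
    "\<forall>m\<in>(MM :: ('n, 'k) laurent set). SL_to_R y * m \<in> MM \<and> Phi L (SL_to_R y * m) = 0"
  then show "\<forall>m\<in>(MM :: ('n, 'k) laurent set). SL_to_R (x + y) * m \<in> MM \<and> Phi L (SL_to_R (x + y) * m) = 0"
    by (simp add: SL_to_R_add distrib_right MM_add Phi_add)
qed

lemma IM_sub:
  assumes "x \<in> IM L (MM :: ('n, 'k::field) laurent set)"
  shows "x \<in> MM \<and> Phi L x = 0"
  using assms unfolding IM_def
proof (rule gen_span_induct)
  show "(0::('n,'k) laurent) \<in> MM \<and> Phi L 0 = 0" by (simp add: MM_zero Phi_zero)
next
  fix i :: "('n, 'k) xz" and m :: "('n, 'k) laurent"
  assume "i \<in> I_L L" "m \<in> MM"
  then show "SL_to_R i * m \<in> MM \<and> Phi L (SL_to_R i * m) = 0" using I_L_prop by blast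
next
  fix x y :: "('n, 'k) laurent"
  assume "x \<in> MM \<and> Phi L x = 0" "y \<in> MM \<and> Phi L y = 0"
  then show "x + y \<in> MM \<and> Phi L (x + y) = 0" by (simp add: MM_add Phi_add)
qed

lemma ker_sub:
  assumes m: "m \<in> (MM :: ('n, 'k::field) laurent set)" and m0: "Phi L m = 0"
  shows "m \<in> IM L MM"
proof -
  define \<sigma> where "\<sigma> K = (SOME b. b \<in> Poly_Mapping.keys m \<and> eta L b = K)" for K
  define \<rho> where "\<rho> = \<sigma> \<circ> eta L"
  have \<rho>: "\<rho> a \<in> Poly_Mapping.keys m \<and> eta L (\<rho> a) = eta L a" if "a \<in> Poly_Mapping.keys m" for a
    unfolding \<rho>_def \<sigma>_def comp_def by (rule someI_ex) (use that in blast)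
  have s0: "(\<Sum>a\<in>Poly_Mapping.keys m. Poly_Mapping.single (\<rho> a) (Poly_Mapping.lookup m a)) = 0"
  proof -
    have "(\<Sum>a\<in>Poly_Mapping.keys m. Poly_Mapping.single (\<rho> a) (Poly_Mapping.lookup m a)) = mapk \<rho> m"
      unfolding mapk_def lin_def ..
    also have "\<dots> = mapk \<sigma> (Phi L m)" unfolding Phi_def \<rho>_def by (simp add: mapk_comp)
    also have "\<dots> = 0" unfolding m0 mapk_def by (rule lin_zero)
    finally show ?thesis .
  qed
  have terms: "Poly_Mapping.single a c - Poly_Mapping.single (\<rho> a) c \<in> IM L MM"
    if a: "a \<in> Poly_Mapping.keys m" for a and c :: 'k
  proof -
    define v where "v = a - \<rho> a"
    have vL: "v \<in> L" unfolding v_def using eta_eq_diff[OF sg] \<rho>[OF a] by metis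
    define z :: "('n, 'k) xz" where "z = Poly_Mapping.single (0, v) 1 - 1"
    have "1 \<in> SL L" using sg unfolding SL_def subgroup_Zn_def by simp
    then have "1 * z \<in> I_L L" unfolding I_L_def z_def using vL by (intro gen_span_act) auto
    then have zI: "z \<in> I_L L" by simp
    have "\<rho> a \<in> Aset L \<psi>" using \<rho>[OF a] m unfolding M_char by blast
    then have sM: "Poly_Mapping.single (\<rho> a) c \<in> MM" by (rule MM_single)
    have "SL_to_R z * Poly_Mapping.single (\<rho> a) c \<in> IM L MM"
      unfolding IM_def by (rule gen_span_act[OF zI sM])
    moreover have "SL_to_R z = xmono v - 1"
      using SL_to_R_gen[of 1 v] unfolding z_def by (simp add: SL_to_R_one)
    moreover have "(xmono v - 1) * Poly_Mapping.single (\<rho> a) c = Poly_Mapping.single a c - Poly_Mapping.single (\<rho> a) c"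
      unfolding xmono_def by (simp add: left_diff_distrib mult_single v_def)
    ultimately show ?thesis by simp
  qed
  have "m = (\<Sum>a\<in>Poly_Mapping.keys m. Poly_Mapping.single a (Poly_Mapping.lookup m a))"
    by (rule poly_expand)
  also have "\<dots> = (\<Sum>a\<in>Poly_Mapping.keys m. Poly_Mapping.single a (Poly_Mapping.lookup m a)
      - Poly_Mapping.single (\<rho> a) (Poly_Mapping.lookup m a))"
    using s0 by (simp add: sum_subtractf)
  finally have me: "m = \<dots>" .
  have "(\<Sum>a\<in>Poly_Mapping.keys m. Poly_Mapping.single a (Poly_Mapping.lookup m a)
      - Poly_Mapping.single (\<rho> a) (Poly_Mapping.lookup m a)) \<in> IM L MM"
    unfolding IM_def by (rule gen_span_sum) (auto intro: terms[unfolded IM_def])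
  then show ?thesis using me by simp
qed

end

lemma Spoly_mult:
  assumes "s \<in> Spoly" "t \<in> Spoly"
  shows "s * t \<in> Spoly"
proof -
  have "Poly_Mapping.keys (s * t) \<subseteq> {a + b |a b. a \<in> Poly_Mapping.keys s \<and> b \<in> Poly_Mapping.keys t}"
    by (rule keys_mult)
  then show ?thesis using assms unfolding Spoly_def using vec_nonneg_add by fastforce
qed

lemma xmono_Spoly: "0 \<le> d \<Longrightarrow> xmono d \<in> Spoly"
  unfolding xmono_def Spoly_def by simp



abbreviation csub :: "'n::finite set \<Rightarrow> (real^'n) set" where
  "csub J \<equiv> {x. \<forall>i. i \<notin> J \<longrightarrow> x $ i = 0}"

lemma subspace_csub: "subspace (csub J)"
proof -
  have "vec.subspace (csub J)" by (rule subspace_substandard_cart)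
  then show ?thesis by (simp add: subspace_vec_eq)
qed

lemma odisc_eq: "odisc J = csub J \<inter> ball 0 1"
  unfolding odisc_def by auto

lemma cdisc_eq: "cdisc J = csub J \<inter> cball 0 1"
  unfolding cdisc_def by auto

lemma aff_dim_odisc: "aff_dim (odisc (J::'n::finite set)) = int (card J)"
proof -
  have "aff_dim (odisc J) = aff_dim (csub J)"
    unfolding odisc_eq
  proof (rule aff_dim_convex_Int_open)
    show "convex (csub J)" by (rule subspace_imp_convex[OF subspace_csub])
    have "0 \<in> csub J \<inter> ball (0::real^'n) 1" by simp
    then show "csub J \<inter> ball 0 1 \<noteq> {}" by blast
  qed simp
  also have "\<dots> = int (dim (csub J))" by (rule aff_dim_subspace[OF subspace_csub])
  also have "dim (csub J) = card J"
  proof -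
    have "vec.dim (csub J) = card J" by (rule dim_substandard_cart)
    then show ?thesis by (simp add: dim_vec_eq)
  qed
  finally show ?thesis .
qed

lemma convex_odisc: "convex (odisc J)"
  unfolding odisc_eq by (intro convex_Int subspace_imp_convex subspace_csub convex_ball)

lemma compact_cdisc: "compact (cdisc J)"
proof -
  have "compact (cball 0 1 \<inter> csub J)"
    by (rule compact_Int_closed[OF compact_cball closed_subspace[OF subspace_csub]])
  then show ?thesis unfolding cdisc_eq by (simp add: Int_commute)
qed

lemma dim_unique:
  fixes e :: "(real^'n::finite) set"
  assumes "cell_of_dim e d" "cell_of_dim e d'"
  shows "d = d'"
proof -
  obtain J :: "'n set" and f g where J: "card J = d" "homeomorphism (odisc J) e f g"
    using assms(1) unfolding cell_of_dim_def by blast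
  obtain J' :: "'n set" and f' g' where J': "card J' = d'" "homeomorphism (odisc J') e f' g'"
    using assms(2) unfolding cell_of_dim_def by blast
  have h1: "odisc J homeomorphic e" using J(2) unfolding homeomorphic_def by blast
  have h2: "e homeomorphic odisc J'" using J'(2) homeomorphism_sym unfolding homeomorphic_def by blast
  have "odisc J homeomorphic odisc J'" by (rule homeomorphic_trans[OF h1 h2])
  then have "aff_dim (odisc J) = aff_dim (odisc J')"
    by (rule homeomorphic_convex_sets[OF convex_odisc convex_odisc])
  then show ?thesis using J(1) J'(1) by (simp add: aff_dim_odisc)
qed

lemma cell0:
  assumes "cell_of_dim (e::(real^'n::finite) set) 0"
  shows "\<exists>p. e = {p}"
proof -
  obtain J :: "'n set" and f g where J: "card J = 0" "homeomorphism (odisc J) e f g"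
    using assms unfolding cell_of_dim_def by blast
  have "J = {}" using J(1) by simp
  then have "odisc J = {0}" unfolding odisc_def by (auto simp: vec_eq_iff)
  then have "e = {f 0}" using J(2) unfolding homeomorphism_def by auto
  then show ?thesis by blast
qed

lemma boundary_nonempty:
  assumes "cell_of_dim (e::(real^'n::finite) set) d" "0 < d"
  shows "closure e - e \<noteq> {}"
proof
  assume b: "closure e - e = {}"
  obtain J :: "'n set" and f g where J: "card J = d" "continuous_on (cdisc J) f" "f ` cdisc J = closure e"
    "homeomorphism (odisc J) e f g"
    using assms(1) unfolding cell_of_dim_def by blast
  have "compact (f ` cdisc J)" by (rule compact_continuous_image[OF J(2) compact_cdisc])
  then have "compact (closure e)" using J(3) by simp
  moreover have "closure e = e" using b closure_subset[of e] by blast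
  ultimately have ce: "compact e" by simp
  have h: "continuous_on e g" "g ` e = odisc J" using J(4) unfolding homeomorphism_def by auto
  have "compact (g ` e)" by (rule compact_continuous_image[OF h(1) ce])
  then have co: "compact (odisc J)" using h(2) by simp
  have "0 \<in> odisc J" unfolding odisc_def by simp
  then have ne: "odisc J \<noteq> {}" by blast
  obtain x where x: "x \<in> odisc J" "\<forall>y\<in>odisc J. norm y \<le> norm x"
    using continuous_attains_sup[OF co ne continuous_on_norm_id] by blast
  obtain i where i: "i \<in> J" using J(1) assms(2) by (metis card.empty ex_in_conv less_irrefl)
  define y where "y = ((1 + norm x) / 2) *\<^sub>R axis i (1::real)"
  have nx: "norm x < 1" using x(1) unfolding odisc_def by simp
  have ny: "norm y = (1 + norm x) / 2" unfolding y_def by simp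
  have "y \<in> odisc J" unfolding odisc_def using ny nx i by (auto simp: y_def axis_def)
  then have "norm y \<le> norm x" using x(2) by blast
  then show False using ny nx by simp
qed

lemma vertex_below_cell:
  fixes L :: "(int^'n::finite) set" and C :: "(real^'n) set set" and \<psi> :: "real^'n \<Rightarrow> int^'n"
  assumes cc: "cell_complex (LR L) C" and cs: "compatible_stratification L C \<psi>"
  shows "\<forall>e\<in>C. cell_of_dim e d \<longrightarrow> (\<forall>p\<in>e. \<exists>q\<in>vertices C. \<psi> q \<le> \<psi> p)"
proof (induction d rule: less_induct)
  case (less d)
  show ?case
  proof (intro ballI impI)
    fix e p assume e: "e \<in> C" and ed: "cell_of_dim e d" and p: "p \<in> e"
    have UC: "\<Union>C = LR L" using cc unfolding cell_complex_def by blast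
    have const: "\<forall>e\<in>C. \<forall>p\<in>e. \<forall>q\<in>e. \<psi> p = \<psi> q" using cs unfolding compatible_stratification_def by blast
    show "\<exists>q\<in>vertices C. \<psi> q \<le> \<psi> p"
    proof (cases "d = 0")
      case True
      then obtain p' where "e = {p'}" using cell0 ed by blast
      then have "{p} \<in> C" using e p by simp
      then show ?thesis unfolding vertices_def by auto
    next
      case False
      obtain d0 where d0: "cell_of_dim e d0"
        "closure e - e \<subseteq> \<Union>{e'\<in>C. \<exists>d'<d0. cell_of_dim e' d'}"
        using cc e unfolding cell_complex_def by blast
      have "d0 = d" using dim_unique[OF d0(1) ed] .
      obtain y where y: "y \<in> closure e" "y \<notin> e"
        using boundary_nonempty[OF ed] False by blast
      then obtain e' d' where e': "e' \<in> C" "d' < d" "cell_of_dim e' d'" "y \<in> e'"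
        using d0(2) \<open>d0 = d\<close> by blast
      obtain q where q: "q \<in> vertices C" "\<psi> q \<le> \<psi> y"
        using less[OF e'(2)] e'(1,3,4) by blast
      have yLR: "y \<in> LR L" using e' UC by blast
      have uc: "up_closed {w. \<psi> y \<le> w}" unfolding up_closed_def using order_trans by blast
      then have "openin (top_of_set (LR L)) {x \<in> LR L. \<psi> x \<in> {w. \<psi> y \<le> w}}"
        using cs unfolding compatible_stratification_def by blast
      then obtain V where V: "open V" "{x \<in> LR L. \<psi> y \<le> \<psi> x} = LR L \<inter> V"
        unfolding openin_open by auto
      have "y \<in> V" using V(2) yLR by blast
      then have "V \<inter> closure e \<noteq> {}" using y(1) by blast
      then have "V \<inter> e \<noteq> {}" using open_Int_closure_eq_empty[OF V(1)] by blast
      then obtain p'' where p'': "p'' \<in> V" "p'' \<in> e" by blast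
      have "p'' \<in> LR L" using p''(2) e UC by blast
      then have "\<psi> y \<le> \<psi> p''" using V(2) p''(1) by blast
      moreover have "\<psi> p'' = \<psi> p" using const e p p''(2) by blast
      ultimately show ?thesis using q order_trans by metis
    qed
  qed
qed

lemma vertex_below:
  fixes L :: "(int^'n::finite) set" and C :: "(real^'n) set set" and \<psi> :: "real^'n \<Rightarrow> int^'n"
  assumes "cell_complex (LR L) C" "compatible_stratification L C \<psi>" "p \<in> LR L"
  shows "\<exists>q\<in>vertices C. \<psi> q \<le> \<psi> p"
proof -
  have "\<Union>C = LR L" using assms(1) unfolding cell_complex_def by blast
  then obtain e where e: "e \<in> C" "p \<in> e" using assms(3) by blast
  then obtain d where "cell_of_dim e d" using assms(1) unfolding cell_complex_def by blast
  then show ?thesis using vertex_below_cell[OF assms(1,2)] e by blast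
qed


lemma vertices_LR: "cell_complex X C \<Longrightarrow> q \<in> vertices C \<Longrightarrow> q \<in> X"
  unfolding cell_complex_def vertices_def by blast

theorem proposition2p15:
  fixes L :: "(int^'n::finite) set"
    and C :: "(real^'n) set set"
    and \<psi> :: "real^'n \<Rightarrow> int^'n"
  assumes "subgroup_Zn L"
    and "cell_complex (LR L) C"
    and "L_equivariant L C"
    and "compatible_stratification L C \<psi>"
  shows "quotient_iso (M_psi L \<psi> :: ('n, 'k::field) laurent set) (IM L (M_psi L \<psi>))
           (gen_span S_act Spoly {gmono L (\<psi> p) | p. p \<in> vertices C})"
proof -
  let ?M = "M_psi L \<psi> :: ('n, 'k) laurent set"
  let ?N = "gen_span S_act Spoly {gmono L (\<psi> p) | p. p \<in> vertices C} :: ((int^'n) set \<Rightarrow>\<^sub>0 'k) set"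
  have img1: "Phi L m \<in> ?N" if m: "m \<in> ?M" for m
  proof -
    obtain N and s :: "nat \<Rightarrow> ('n, 'k) laurent" and g :: "nat \<Rightarrow> ('n, 'k) laurent"
      where sg: "\<forall>j<N. s j \<in> Spoly \<and> g j \<in> {xmono (\<psi> p) |p. p \<in> LR L}"
        "m = (\<Sum>j<N. s j * g j)"
      using m unfolding M_psi_def gen_span_def by blast
    have "Phi L m = (\<Sum>j<N. Phi L (s j * g j))"
      unfolding sg(2) Phi_def by (rule mapk_sum)
    also have "\<dots> \<in> ?N"
    proof (rule gen_span_sum)
      fix j assume "j \<in> {..<N}"
      then have j: "s j \<in> Spoly" "g j \<in> {xmono (\<psi> p) |p. p \<in> LR L}" using sg(1) by auto
      then obtain p where p: "g j = xmono (\<psi> p)" "p \<in> LR L" by blast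
      obtain q where q: "q \<in> vertices C" "\<psi> q \<le> \<psi> p"
        using vertex_below[OF assms(2) assms(4) p(2)] by blast
      define d where "d = \<psi> p - \<psi> q"
      have d0: "0 \<le> d" unfolding d_def using q(2) by (rule vec_le_diff)
      have "s j * g j = (s j * xmono d) * xmono (\<psi> q)"
        unfolding p(1) xmono_def d_def by (simp add: mult.assoc mult_single)
      then have "Phi L (s j * g j) = S_act (s j * xmono d) (gmono L (\<psi> q))"
        by (simp add: Phi_mult Phi_xmono)
      moreover have "s j * xmono d \<in> Spoly" using Spoly_mult[OF j(1) xmono_Spoly[OF d0]] .
      ultimately show "Phi L (s j * g j) \<in> ?N"
        using q(1) by (auto intro: gen_span_act)
    qed simp
    finally show ?thesis .
  qed
  have img2: "n \<in> Phi L ` ?M" if n: "n \<in> ?N" for n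
    using n
  proof (rule gen_span_induct)
    show "0 \<in> Phi L ` ?M" using MM_zero[OF assms(1,4)] Phi_zero by (metis image_eqI)
  next
    fix s :: "('n, 'k) laurent" and G :: "(int^'n) set \<Rightarrow>\<^sub>0 'k" assume s: "s \<in> Spoly" and G: "G \<in> {gmono L (\<psi> p) | p. p \<in> vertices C}"
    then obtain p where p: "G = gmono L (\<psi> p)" "p \<in> vertices C" by blast
    have "p \<in> LR L" using vertices_LR[OF assms(2) p(2)] .
    then have "s * xmono (\<psi> p) \<in> ?M" unfolding M_psi_def using s by (intro gen_span_act) auto
    moreover have "Phi L (s * xmono (\<psi> p)) = S_act s G" by (simp add: Phi_mult Phi_xmono p(1))
    ultimately show "S_act s G \<in> Phi L ` ?M" by (metis image_eqI)
  next
    fix x y assume "x \<in> Phi L ` ?M" "y \<in> Phi L ` ?M"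
    then obtain mx my where "mx \<in> ?M" "my \<in> ?M" "x = Phi L mx" "y = Phi L my" by blast
    then show "x + y \<in> Phi L ` ?M" using MM_add[OF assms(1,4)] Phi_add by (metis image_eqI)
  qed
  have img: "Phi L ` ?M = ?N" using img1 img2 by blast
  have ker: "{m \<in> ?M. Phi L m = 0} = IM L ?M"
    using IM_sub[OF assms(1,4)] ker_sub[OF assms(1,4)] by blast
  show ?thesis
    unfolding quotient_iso_def
    by (rule exI[of _ "Phi L"]) (use img ker Phi_add Phi_mult in auto)
qed

end
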